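(* Let $X$ be a metric space of bounded geometry, $1\le p<\infty$, and let $\mathfrak U$ be a cover of $X$ with finite multiplicity $m(\mathfrak U)$, finite mesh $S(\mathfrak U)$, positive Lebesgue number $L(\mathfrak U)$, and such that no member of $\mathfrak U$ equals $X$. Then there exists a map $\xi\colon X\to\ell^p_1(X)$ with $S(\xi)=S(\mathfrak U)$ which is $\dfrac{2\,(2m(\mathfrak U)^2)^{1/p}}{L(\mathfrak U)}$-Lipschitz.
   Context: A metric space has bounded geometry if for every $R\ge0$ there is $C<\infty$ such that every ball of radius $R$ contains at most $C$ points. For a cover $\mathfrak U$ of $X$: $L(\mathfrak U,x)=\sup_{U\in\mathfrak U}\sup\{r: B_r(x)\subset U\}$, $L(\mathfrak U)=\inf_x L(\mathfrak U,x)$, $m(\mathfrak U)=\max_x\#\{U\in\mathfrak U:x\in U\}$, $S(\mathfrak U)=\sup_{U\in\mathfrak U}\operatorname{diam}U$. $\ell^p(X)$ is the space of $p$-summable real functions on $X$, $\ell^p_1(X)$ its unit sphere; for $\xi\colon X\to\ell^p(X)$, $x\mapsto\xi_x$, $S(\xi)=\sup\{d(x,y):\xi_x(y)\ne0\}$. *)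

theory Defs
  imports "HOL-Analysis.Analysis"
begin

text \<open>The metric space X is the whole type 'a :: metric_space.\<close>

definition bounded_geometry :: "'a::metric_space itself \<Rightarrow> bool" where
  "bounded_geometry _ \<longleftrightarrow>
     (\<forall>R::real. R \<ge> 0 \<longrightarrow> (\<exists>C::nat. \<forall>x::'a. finite (cball x R) \<and> card (cball x R) \<le> C))"

definition ediam :: "'a::metric_space set \<Rightarrow> ereal" where
  "ediam U = (SUP xy\<in>U \<times> U. ereal (dist (fst xy) (snd xy)))"

definition mesh :: "'a::metric_space set set \<Rightarrow> ereal" where
  "mesh \<U> = (SUP U\<in>\<U>. ediam U)"

definition leb_at :: "'a::metric_space set set \<Rightarrow> 'a \<Rightarrow> ereal" where
  "leb_at \<U> x = (SUP U\<in>\<U>. Sup {ereal r | r. ball x r \<subseteq> U})"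

definition leb :: "'a::metric_space set set \<Rightarrow> ereal" where
  "leb \<U> = (INF x. leb_at \<U> x)"

definition finite_mult :: "'a set set \<Rightarrow> bool" where
  "finite_mult \<U> \<longleftrightarrow> (\<exists>M::nat. \<forall>x. finite {U\<in>\<U>. x \<in> U} \<and> card {U\<in>\<U>. x \<in> U} \<le> M)"

definition mult :: "'a set set \<Rightarrow> nat" where
  "mult \<U> = (SUP x. card {U\<in>\<U>. x \<in> U})"

definition in_lp :: "real \<Rightarrow> ('a \<Rightarrow> real) \<Rightarrow> bool" where
  "in_lp p f \<longleftrightarrow> (\<lambda>z. \<bar>f z\<bar> powr p) summable_on UNIV"

definition lp_norm :: "real \<Rightarrow> ('a \<Rightarrow> real) \<Rightarrow> real" where
  "lp_norm p f = (\<Sum>\<^sub>\<infinity>z. \<bar>f z\<bar> powr p) powr (1 / p)"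

definition lp_sphere :: "real \<Rightarrow> ('a \<Rightarrow> real) set" where
  "lp_sphere p = {f. in_lp p f \<and> lp_norm p f = 1}"

definition prop_xi :: "('a::metric_space \<Rightarrow> 'a \<Rightarrow> real) \<Rightarrow> ereal" where
  "prop_xi \<xi> = Sup {ereal (dist x y) | x y. \<xi> x y \<noteq> 0}"

end

theory Submission
  imports Defs
begin
definition Np :: "real \<Rightarrow> 'b set \<Rightarrow> ('b \<Rightarrow> real) \<Rightarrow> real" where
  "Np p I f = (\<Sum>i\<in>I. \<bar>f i\<bar> powr p) powr (1/p)"

lemma Np_nonneg: "Np p I f \<ge> 0" by (simp add: Np_def)

lemma Np_pow: assumes "p > 0" shows "Np p I f powr p = (\<Sum>i\<in>I. \<bar>f i\<bar> powr p)"
proof -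
  have "(\<Sum>i\<in>I. \<bar>f i\<bar> powr p) \<ge> 0" by (simp add: sum_nonneg)
  thus ?thesis using assms by (simp add: Np_def powr_powr)
qed

lemma Np_of_pow: assumes "p > 0" "S \<ge> 0" "Np p I f powr p \<le> S"
  shows "Np p I f \<le> S powr (1/p)"
proof -
  have "(Np p I f powr p) powr (1/p) \<le> S powr (1/p)"
    using assms by (intro powr_mono2) (auto simp: Np_nonneg)
  thus ?thesis using assms by (simp add: powr_powr Np_nonneg)
qed

lemma Np_mono: assumes "p > 0" "\<And>i. i \<in> I \<Longrightarrow> \<bar>f i\<bar> \<le> \<bar>g i\<bar>"
  shows "Np p I f \<le> Np p I g"
  unfolding Np_def using assms
  by (intro powr_mono2 sum_mono sum_nonneg powr_mono2) auto

lemma Np_scale: assumes "p > 0" shows "Np p I (\<lambda>i. c * f i) = \<bar>c\<bar> * Np p I f"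
proof -
  have "(\<Sum>i\<in>I. \<bar>c * f i\<bar> powr p) = \<bar>c\<bar> powr p * (\<Sum>i\<in>I. \<bar>f i\<bar> powr p)"
    by (simp add: abs_mult powr_mult sum_distrib_left)
  hence "Np p I (\<lambda>i. c * f i) = (\<bar>c\<bar> powr p) powr (1/p) * Np p I f"
    unfolding Np_def by (simp add: powr_mult sum_nonneg)
  thus ?thesis using assms by (simp add: powr_powr)
qed

lemma Np_elem: assumes "p > 0" "finite I" "j \<in> I" shows "\<bar>f j\<bar> \<le> Np p I f"
proof -
  have "\<bar>f j\<bar> powr p \<le> (\<Sum>i\<in>I. \<bar>f i\<bar> powr p)"
    using assms by (intro member_le_sum) auto
  hence "(\<bar>f j\<bar> powr p) powr (1/p) \<le> Np p I f" unfolding Np_def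
    using assms by (intro powr_mono2) auto
  thus ?thesis using assms by (simp add: powr_powr)
qed

lemma Np_bound: assumes "p > 0" "\<And>i. i \<in> I \<Longrightarrow> \<bar>f i\<bar> \<le> c"
  shows "Np p I f \<le> real (card I) powr (1/p) * c"
proof (cases "I = {} \<or> infinite I")
  case True thus ?thesis by (auto simp: Np_def)
next
  case False
  then obtain j where "j \<in> I" by auto
  hence c0: "c \<ge> 0" using assms(2)[of j] by auto
  have "Np p I f powr p \<le> real (card I) * c powr p"
    using assms by (simp add: Np_pow) (metis (no_types, lifting) abs_ge_zero powr_mono2 sum_bounded_above less_imp_le)
  hence "Np p I f \<le> (real (card I) * c powr p) powr (1/p)"
    using assms c0 by (intro Np_of_pow) auto
  also have "\<dots> = real (card I) powr (1/p) * c" using assms c0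
    by (simp add: powr_mult powr_powr)
  finally show ?thesis .
qed

lemma powr_conv0: fixes p u v t :: real assumes "p \<ge> 1" "u \<ge> 0" "v \<ge> 0" "0 \<le> t" "t \<le> 1"
  shows "((1-t) * u + t * v) powr p \<le> (1-t) * u powr p + t * v powr p"
proof -
  have tp: "s powr p \<le> s" if "0 \<le> s" "s \<le> 1" for s::real
  proof (cases "s = 0")
    case False
    hence "s powr p \<le> s powr 1" using that assms by (intro powr_mono') auto
    thus ?thesis using that by simp
  qed (use assms in auto)
  consider "u = 0" | "v = 0" | "t = 0" | "t = 1" | "u > 0" "v > 0" "0 < t" "t < 1"
    using assms by linarith
  thus ?thesis
  proof cases
    case 1
    have "(t * v) powr p = t powr p * v powr p" using assms by (simp add: powr_mult)
    also have "\<dots> \<le> t * v powr p" using tp[of t] assms by (intro mult_right_mono) auto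
    finally show ?thesis using 1 by simp
  next
    case 2
    have "((1-t) * u) powr p = (1-t) powr p * u powr p" using assms by (simp add: powr_mult)
    also have "\<dots> \<le> (1-t) * u powr p" using tp[of "1-t"] assms by (intro mult_right_mono) auto
    finally show ?thesis using 2 by simp
  next
    case 3 thus ?thesis by simp
  next
    case 4 thus ?thesis by simp
  next
    case 5
    show ?thesis using convex_onD[OF powr_convex[OF assms(1)], of t u v] 5 by simp
  qed
qed

lemma Np_zero: assumes "p > 0" "finite I" "Np p I f = 0" "i \<in> I" shows "f i = 0"
  using Np_elem[OF assms(1,2,4), of f] assms(3) by simp

lemma minkowski_nonneg:
  assumes p: "p \<ge> 1" and I: "finite I" and f: "\<And>i. i\<in>I \<Longrightarrow> f i \<ge> 0" and g: "\<And>i. i\<in>I \<Longrightarrow> g i \<ge> 0"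
  shows "Np p I (\<lambda>i. f i + g i) \<le> Np p I f + Np p I g"
proof -
  define a where "a = Np p I f"
  define b where "b = Np p I g"
  have a0: "a \<ge> 0" "b \<ge> 0" by (auto simp: a_def b_def Np_nonneg)
  show ?thesis
  proof (cases "a = 0 \<or> b = 0")
    case True
    thus ?thesis
    proof
      assume "a = 0"
      hence "\<And>i. i\<in>I \<Longrightarrow> f i = 0" using Np_zero[OF _ I, of p f] p a_def by auto
      hence "Np p I (\<lambda>i. f i + g i) = Np p I g" unfolding Np_def by (intro arg_cong[where f="\<lambda>x. x powr _"] sum.cong) auto
      thus ?thesis using Np_nonneg[of p I f] by simp
    next
      assume "b = 0"
      hence "\<And>i. i\<in>I \<Longrightarrow> g i = 0" using Np_zero[OF _ I, of p g] p b_def by auto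
      hence "Np p I (\<lambda>i. f i + g i) = Np p I f" unfolding Np_def by (intro arg_cong[where f="\<lambda>x. x powr _"] sum.cong) auto
      thus ?thesis using Np_nonneg[of p I g] by simp
    qed
  next
    case False
    hence ap: "a > 0" "b > 0" using a0 by auto
    define t where "t = b / (a+b)"
    have t: "0 \<le> t" "t \<le> 1" "1 - t = a/(a+b)" using ap by (auto simp: t_def field_simps)
    have key: "\<bar>f i + g i\<bar> powr p \<le> (a+b) powr p * ((1-t) * (\<bar>f i\<bar> powr p / a powr p) + t * (\<bar>g i\<bar> powr p / b powr p))"
      if i: "i \<in> I" for i
    proof -
      have e1: "(1-t) * (f i / a) = f i / (a+b)" using ap by (simp add: t(3))
      have e2: "t * (g i / b) = g i / (a+b)" using ap by (simp add: t_def)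
      have ab0: "a + b \<noteq> 0" using ap by simp
      have "f i + g i = (a+b) * ((1-t) * (f i / a) + t * (g i / b))"
        unfolding e1 e2 using ab0 by (simp add: add_divide_distrib[symmetric])
      hence "\<bar>f i + g i\<bar> powr p = (a+b) powr p * ((1-t) * (f i / a) + t * (g i / b)) powr p"
        using ap f[OF i] g[OF i] t by (simp add: powr_mult)
      also have "\<dots> \<le> (a+b) powr p * ((1-t) * (f i / a) powr p + t * (g i / b) powr p)"
        using ap f[OF i] g[OF i] t p by (intro mult_left_mono powr_conv0) auto
      finally show ?thesis using ap f[OF i] g[OF i] by (simp add: powr_divide)
    qed
    have "Np p I (\<lambda>i. f i + g i) powr p = (\<Sum>i\<in>I. \<bar>f i + g i\<bar> powr p)" using p by (simp add: Np_pow)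
    also have "\<dots> \<le> (\<Sum>i\<in>I. (a+b) powr p * ((1-t) * (\<bar>f i\<bar> powr p / a powr p) + t * (\<bar>g i\<bar> powr p / b powr p)))"
      by (intro sum_mono key)
    also have "\<dots> = (a+b) powr p * ((1-t) * ((\<Sum>i\<in>I. \<bar>f i\<bar> powr p) / a powr p) + t * ((\<Sum>i\<in>I. \<bar>g i\<bar> powr p) / b powr p))"
      by (simp add: sum_distrib_left sum.distrib sum_divide_distrib algebra_simps)
    also have "\<dots> = (a+b) powr p"
      using ap p by (simp add: a_def b_def Np_pow[symmetric])
    finally have "Np p I (\<lambda>i. f i + g i) \<le> ((a+b) powr p) powr (1/p)"
      using p ap by (intro Np_of_pow) auto
    thus ?thesis using p ap by (simp add: powr_powr a_def b_def)
  qed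
qed

lemma minkowski:
  assumes p: "p \<ge> 1" and I: "finite I"
  shows "Np p I (\<lambda>i. f i + g i) \<le> Np p I f + Np p I g"
proof -
  have "Np p I (\<lambda>i. f i + g i) \<le> Np p I (\<lambda>i. \<bar>f i\<bar> + \<bar>g i\<bar>)"
    using p by (intro Np_mono) auto
  also have "\<dots> \<le> Np p I (\<lambda>i. \<bar>f i\<bar>) + Np p I (\<lambda>i. \<bar>g i\<bar>)"
    by (intro minkowski_nonneg p I) auto
  finally show ?thesis by (simp add: Np_def)
qed

lemma Np_rev: assumes p: "p \<ge> 1" and I: "finite I"
  shows "\<bar>Np p I f - Np p I g\<bar> \<le> Np p I (\<lambda>i. f i - g i)"
proof -
  have 1: "Np p I f \<le> Np p I (\<lambda>i. f i - g i) + Np p I g"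
    using minkowski[OF p I, of "\<lambda>i. f i - g i" g] by simp
  have "Np p I g \<le> Np p I (\<lambda>i. g i - f i) + Np p I f"
    using minkowski[OF p I, of "\<lambda>i. g i - f i" f] by simp
  moreover have "Np p I (\<lambda>i. g i - f i) = Np p I (\<lambda>i. f i - g i)"
    unfolding Np_def by (simp add: abs_minus_commute)
  ultimately show ?thesis using 1 by linarith
qed

lemma Np_normalize: assumes p: "p \<ge> 1" and I: "finite I" and A: "Np p I a > 0" and B: "Np p I b > 0"
  shows "Np p I (\<lambda>i. a i / Np p I a - b i / Np p I b) \<le> 2 * Np p I (\<lambda>i. a i - b i) / Np p I a"
proof -
  define A B where "A = Np p I a" and "B = Np p I b"
  have A0: "A > 0" and B0: "B > 0" using A B by (auto simp: A_def B_def)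
  have eq: "(\<lambda>i. a i / A - b i / B) = (\<lambda>i. (1/A) * (a i - b i) + (1/A - 1/B) * b i)"
    by (rule ext) (simp add: algebra_simps diff_divide_distrib)
  have "Np p I (\<lambda>i. a i / A - b i / B) \<le> Np p I (\<lambda>i. (1/A) * (a i - b i)) + Np p I (\<lambda>i. (1/A - 1/B) * b i)"
    unfolding eq by (rule minkowski[OF p I])
  also have "Np p I (\<lambda>i. (1/A) * (a i - b i)) = Np p I (\<lambda>i. a i - b i) / A"
    using p A0 Np_scale[of p I "1/A" "\<lambda>i. a i - b i"] by simp
  also have "Np p I (\<lambda>i. (1/A - 1/B) * b i) = \<bar>1/A - 1/B\<bar> * B"
    using p Np_scale[of p I "1/A - 1/B" b] by (simp add: B_def)
  also have "\<bar>1/A - 1/B\<bar> * B = \<bar>A - B\<bar> / A"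
  proof -
    have "1/A - 1/B = (B - A) / (A * B)" using A0 B0 by (simp add: field_simps)
    hence "\<bar>1/A - 1/B\<bar> * B = \<bar>B - A\<bar> / (A * B) * B" using A0 B0 by simp
    also have "\<dots> = \<bar>A - B\<bar> / A" using A0 B0 by (simp add: abs_minus_commute)
    finally show ?thesis .
  qed
  also have "\<bar>A - B\<bar> / A \<le> Np p I (\<lambda>i. a i - b i) / A"
    using Np_rev[OF p I, of a b] A0 by (intro divide_right_mono) (auto simp: A_def B_def)
  finally show ?thesis by (simp add: A_def B_def)
qed

lemma discrete_open:
  fixes S :: "'a::metric_space set"
  assumes fin: "\<And>x::'a. finite (cball x 1)"
  shows "open S"
  unfolding open_dist
proof (intro ballI)
  fix x assume "x \<in> S"
  define T where "T = cball x 1 - {x}"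
  have fT: "finite T" using fin[of x] by (simp add: T_def)
  define e where "e = Min (insert 1 (dist x ` T))"
  have e0: "e > 0" unfolding e_def using fT by (subst Min_gr_iff) (auto simp: T_def)
  have e1: "e \<le> 1" unfolding e_def using fT by simp
  have "\<forall>y. dist y x < e \<longrightarrow> y \<in> S"
  proof (intro allI impI)
    fix y assume y: "dist y x < e"
    show "y \<in> S"
    proof (cases "y = x")
      case False
      hence "y \<in> T" using y e1 by (auto simp: T_def dist_commute)
      hence "e \<le> dist x y" unfolding e_def using fT by simp
      thus ?thesis using y by (simp add: dist_commute)
    qed (use \<open>x \<in> S\<close> in simp)
  qed
  thus "\<exists>e>0. \<forall>y. dist y x < e \<longrightarrow> y \<in> S" using e0 by blast
qed

lemma ball_le_infdist:
  assumes "ball x r \<subseteq> U" "U \<noteq> UNIV"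
  shows "r \<le> infdist x (-U)"
proof -
  have ne: "-U \<noteq> {}" using assms by auto
  have "r \<le> (INF a\<in>-U. dist x a)"
    using ne by (rule cINF_greatest) (use assms(1) in \<open>auto simp: subset_iff not_less\<close>)
  thus ?thesis using ne by (simp add: infdist_notempty)
qed

lemma infsum_fin_support:
  fixes f :: "'a \<Rightarrow> real"
  assumes "finite F" "\<And>z. z \<notin> F \<Longrightarrow> f z = 0"
  shows "f summable_on UNIV" "infsum f UNIV = sum f F"
proof -
  have "f summable_on F" using assms by simp
  thus "f summable_on UNIV" using summable_on_cong_neutral[of UNIV F f f] assms by auto
  have "infsum f F = infsum f UNIV" using infsum_cong_neutral[of UNIV F f f] assms by auto
  thus "infsum f UNIV = sum f F" using assms by simp
qed

lemma Np_extend: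
  assumes "p > 0" "finite J" "I \<subseteq> J" "\<And>i. i \<in> J - I \<Longrightarrow> f i = 0"
  shows "Np p J f = Np p I f"
  unfolding Np_def using assms
  by (subst sum.mono_neutral_left[of J I]) auto

definition mu :: "'a set \<Rightarrow> 'a \<Rightarrow> real" where
  "mu U z = (if z \<in> U then 1 / real (card U) else 0)"

lemma mu_nonneg: "mu U z \<ge> 0" by (simp add: mu_def)

lemma mu_sum: assumes "finite F" "U \<subseteq> F" "finite U" "U \<noteq> {}"
  shows "(\<Sum>z\<in>F. mu U z) = 1"
proof -
  have "(\<Sum>z\<in>F. mu U z) = (\<Sum>z\<in>U. mu U z)"
    using assms by (intro sum.mono_neutral_right) (auto simp: mu_def)
  also have "\<dots> = 1" using assms by (simp add: mu_def)
  finally show ?thesis .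
qed

lemma Np_pow_mu:
  assumes "p > 0"
  shows "Np p I (\<lambda>U. c U * mu U z powr (1/p)) powr p = (\<Sum>U\<in>I. \<bar>c U\<bar> powr p * mu U z)"
proof -
  have "\<bar>c U * mu U z powr (1/p)\<bar> powr p = \<bar>c U\<bar> powr p * mu U z" for U
    using assms mu_nonneg[of U z] by (simp add: abs_mult powr_mult powr_powr)
  thus ?thesis using assms by (simp add: Np_pow)
qed

theorem theorem3p2p1:
  fixes \<U> :: "'a::metric_space set set" and p :: real
  assumes "bounded_geometry TYPE('a)"
    and "1 \<le> p"
    and "\<Union>\<U> = UNIV"
    and "finite_mult \<U>"
    and "mesh \<U> < \<infinity>"
    and "leb \<U> > 0"
    and "UNIV \<notin> \<U>"
  shows "\<exists>\<xi> :: 'a \<Rightarrow> 'a \<Rightarrow> real.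
           (\<forall>x. \<xi> x \<in> lp_sphere p) \<and>
           prop_xi \<xi> = mesh \<U> \<and>
           (\<forall>x y. lp_norm p (\<lambda>z. \<xi> x z - \<xi> y z)
              \<le> (2 * (2 * real (mult \<U>) ^ 2) powr (1 / p) / real_of_ereal (leb \<U>)) * dist x y)"
proof -
  note bg = assms(1) and p1 = assms(2) and cov = assms(3) and fm = assms(4)
    and meshfin = assms(5) and lebpos = assms(6) and notuniv = assms(7)
  have p0: "p > 0" using p1 by simp
  have fin_cball: "finite (cball x R)" if "R \<ge> 0" for x :: 'a and R
    using bg that unfolding bounded_geometry_def by blast
  have allopen: "open (S::'a set)" for S
    by (rule discrete_open) (use fin_cball in auto)
  define Ux where "Ux x = {U\<in>\<U>. x \<in> U}" for x
  define m where "m = mult \<U>"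
  obtain M0 :: nat where M0: "\<And>x. finite (Ux x) \<and> card (Ux x) \<le> M0"
    using fm unfolding finite_mult_def Ux_def by blast
  have finUx: "finite (Ux x)" for x using M0 by blast
  have cardUx: "card (Ux x) \<le> m" for x
  proof -
    have "bdd_above (range (\<lambda>x. card (Ux x)))" using M0 by (auto intro!: bdd_aboveI[of _ M0])
    thus ?thesis unfolding m_def mult_def Ux_def[symmetric] by (intro cSUP_upper) auto
  qed
  obtain x0 :: 'a where True by blast
  have Uxne: "Ux x \<noteq> {}" for x using cov unfolding Ux_def by auto
  have m1: "m \<ge> 1"
  proof -
    have "card (Ux x0) > 0" using Uxne[of x0] finUx[of x0] by (simp add: card_gt_0_iff)
    thus ?thesis using cardUx[of x0] by linarith
  qed
  have dist_mesh: "ereal (dist u v) \<le> mesh \<U>" if "U \<in> \<U>" "u \<in> U" "v \<in> U" for U u v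
  proof -
    have "ereal (dist u v) \<le> ediam U" unfolding ediam_def
      by (rule SUP_upper2[of "(u,v)"]) (use that in auto)
    also have "\<dots> \<le> mesh \<U>" unfolding mesh_def by (rule SUP_upper) fact
    finally show ?thesis .
  qed
  define Mr where "Mr = real_of_ereal (mesh \<U>)"
  have "x0 \<in> \<Union>\<U>" using cov by simp
  then obtain U0 where U0: "U0 \<in> \<U>" "x0 \<in> U0" by (rule UnionE)
  have meshge: "mesh \<U> \<ge> 0" using dist_mesh[OF U0 U0(2)] by (metis dist_self zero_ereal_def)
  have meshMr: "mesh \<U> = ereal Mr"
    using meshge meshfin unfolding Mr_def by (cases "mesh \<U>") simp_all
  have Mr0: "Mr \<ge> 0" using meshge meshMr by simp
  have dist_Mr: "dist u v \<le> Mr" if "U \<in> \<U>" "u \<in> U" "v \<in> U" for U u v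
    using dist_mesh[OF that] meshMr by simp
  have finU: "finite U" if "U \<in> \<U>" for U
  proof (cases "U = {}")
    case False
    then obtain u where u: "u \<in> U" by blast
    have "U \<subseteq> cball u Mr" using dist_Mr[OF that u] by auto
    thus ?thesis using fin_cball[OF Mr0, of u] finite_subset by blast
  qed simp
  define phi where "phi U x = infdist x (-U)" for U and x :: 'a
  have phi_nonneg: "phi U x \<ge> 0" for U x by (simp add: phi_def infdist_nonneg)
  have phi_zero: "phi U x = 0" if "x \<notin> U" for U x using that by (simp add: phi_def)
  have phi_pos: "phi U x > 0" if "U \<in> \<U>" "x \<in> U" for U x
  proof -
    have "closed (-U)" using allopen[of U] by (simp add: closed_Compl)
    moreover have "-U \<noteq> {}"
    proof
      assume "-U = {}"
      hence "U = UNIV" by (metis Compl_empty_eq double_compl)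
      thus False using notuniv that by simp
    qed
    ultimately show ?thesis unfolding phi_def using that by (intro infdist_pos_not_in_closed) auto
  qed
  have phi_lip: "\<bar>phi U x - phi U y\<bar> \<le> dist x y" for U x y
    unfolding phi_def by (rule infdist_triangle_abs)
  define A where "A x = Np p (Ux x) (\<lambda>U. phi U x)" for x
  have leb_le: "leb \<U> \<le> ereal (A x)" for x
  proof -
    have "leb \<U> \<le> leb_at \<U> x" unfolding leb_def by (rule INF_lower) simp
    also have "\<dots> \<le> ereal (A x)" unfolding leb_at_def
    proof (intro SUP_least Sup_least)
      fix U r assume U: "U \<in> \<U>" and "r \<in> {ereal r |r. ball x r \<subseteq> U}"
      then obtain s where s: "r = ereal s" "ball x s \<subseteq> U" by blast
      have "s \<le> A x"
      proof (cases "s \<le> 0")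
        case True thus ?thesis using Np_nonneg[of p "Ux x" "\<lambda>U. phi U x"] unfolding A_def by linarith
      next
        case False
        hence "x \<in> U" using s by auto
        hence UU: "U \<in> Ux x" using U by (simp add: Ux_def)
        have "s \<le> phi U x" unfolding phi_def
          by (rule ball_le_infdist[OF s(2)]) (use notuniv U in auto)
        also have "\<dots> \<le> A x" unfolding A_def using Np_elem[OF p0 finUx UU, of "\<lambda>U. phi U x"] phi_nonneg
          by simp
        finally show ?thesis .
      qed
      thus "r \<le> ereal (A x)" using s by simp
    qed
    finally show ?thesis .
  qed
  define L where "L = real_of_ereal (leb \<U>)"
  have lebL: "leb \<U> = ereal L" using leb_le[of x0] lebpos unfolding L_def
    by (cases "leb \<U>") simp_all
  have L0: "L > 0" using lebpos lebL by simp
  have LA: "L \<le> A x" for x using leb_le[of x] lebL by simp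
  have A0: "A x > 0" for x using LA[of x] L0 by simp
  define \<xi> where "\<xi> x z = Np p (Ux x) (\<lambda>U. phi U x / A x * mu U z powr (1/p))" for x z
  define S where "S x = \<Union>(Ux x)" for x
  have finS: "finite (S x)" for x unfolding S_def using finUx finU by (auto simp: Ux_def)
  have xi_nonneg: "\<xi> x z \<ge> 0" for x z by (simp add: \<xi>_def Np_nonneg)
  have xi_pow: "\<xi> x z powr p = (\<Sum>U\<in>Ux x. \<bar>phi U x / A x\<bar> powr p * mu U z)" for x z
    unfolding \<xi>_def by (rule Np_pow_mu[OF p0])
  have xi_zero: "\<xi> x z = 0" if "z \<notin> S x" for x z
  proof -
    have "mu U z = 0" if "U \<in> Ux x" for U using that \<open>z \<notin> S x\<close> by (auto simp: mu_def S_def)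
    thus ?thesis unfolding \<xi>_def Np_def using p0 by simp
  qed
  have xi_pos: "\<xi> x z \<noteq> 0" if "U \<in> \<U>" "x \<in> U" "z \<in> U" for x z U
  proof -
    have UU: "U \<in> Ux x" using that by (simp add: Ux_def)
    have "U \<noteq> {}" using that by auto
    hence "mu U z > 0" using that finU[OF that(1)] by (simp add: mu_def card_gt_0_iff)
    hence "0 < \<bar>phi U x / A x * mu U z powr (1/p)\<bar>" using phi_pos[OF that(1,2)] A0[of x] by simp
    also have "\<dots> \<le> \<xi> x z" unfolding \<xi>_def by (rule Np_elem[OF p0 finUx UU])
    finally show ?thesis by simp
  qed
  have part1: "\<xi> x \<in> lp_sphere p" for x
  proof -
    have z: "\<And>z. z \<notin> S x \<Longrightarrow> \<bar>\<xi> x z\<bar> powr p = 0" using xi_zero by simp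
    have sum1: "(\<Sum>z\<in>S x. \<bar>\<xi> x z\<bar> powr p) = 1"
    proof -
      have "(\<Sum>z\<in>S x. \<bar>\<xi> x z\<bar> powr p) = (\<Sum>z\<in>S x. \<Sum>U\<in>Ux x. \<bar>phi U x / A x\<bar> powr p * mu U z)"
        using xi_nonneg xi_pow by simp
      also have "\<dots> = (\<Sum>U\<in>Ux x. \<bar>phi U x / A x\<bar> powr p * (\<Sum>z\<in>S x. mu U z))"
        by (subst sum.swap) (simp add: sum_distrib_left)
      also have "\<dots> = (\<Sum>U\<in>Ux x. \<bar>phi U x / A x\<bar> powr p)"
      proof (intro sum.cong refl)
        fix U assume U: "U \<in> Ux x"
        have "(\<Sum>z\<in>S x. mu U z) = 1"
          using U finS[of x] finU by (intro mu_sum) (auto simp: S_def Ux_def)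
        thus "\<bar>phi U x / A x\<bar> powr p * (\<Sum>z\<in>S x. mu U z) = \<bar>phi U x / A x\<bar> powr p" by simp
      qed
      also have "\<dots> = Np p (Ux x) (\<lambda>U. (1 / A x) * phi U x) powr p"
        using p0 by (simp add: Np_pow)
      also have "\<dots> = 1" using Np_scale[OF p0, of "Ux x" "1 / A x" "\<lambda>U. phi U x"] A0[of x]
        by (simp add: A_def)
      finally show ?thesis .
    qed
    show ?thesis unfolding lp_sphere_def in_lp_def lp_norm_def
      using infsum_fin_support[OF finS z] sum1 by simp
  qed
  have part2: "prop_xi \<xi> = mesh \<U>"
  proof (rule antisym)
    show "prop_xi \<xi> \<le> mesh \<U>" unfolding prop_xi_def
    proof (rule Sup_least)
      fix r assume "r \<in> {ereal (dist x y) |x y. \<xi> x y \<noteq> 0}"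
      then obtain x y where r: "r = ereal (dist x y)" "\<xi> x y \<noteq> 0" by blast
      hence "y \<in> S x" using xi_zero by blast
      then obtain U where "U \<in> \<U>" "x \<in> U" "y \<in> U" by (auto simp: S_def Ux_def)
      thus "r \<le> mesh \<U>" using r dist_mesh by blast
    qed
    show "mesh \<U> \<le> prop_xi \<xi>" unfolding mesh_def
    proof (rule SUP_least)
      fix U assume U: "U \<in> \<U>"
      show "ediam U \<le> prop_xi \<xi>" unfolding ediam_def
      proof (rule SUP_least)
        fix uv assume "uv \<in> U \<times> U"
        then obtain u v where uv: "uv = (u,v)" "u \<in> U" "v \<in> U" by blast
        have "ereal (dist u v) \<in> {ereal (dist x y) |x y. \<xi> x y \<noteq> 0}"
          using xi_pos[OF U uv(2,3)] by blast
        hence "ereal (dist u v) \<le> prop_xi \<xi>" unfolding prop_xi_def by (rule Sup_upper)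
        thus "ereal (dist (fst uv) (snd uv)) \<le> prop_xi \<xi>" using uv by simp
      qed
    qed
  qed
  have part3: "lp_norm p (\<lambda>z. \<xi> x z - \<xi> y z)
              \<le> (2 * (2 * real m ^ 2) powr (1 / p) / L) * dist x y" for x y
  proof -
    define I where "I = Ux x \<union> Ux y"
    have finI: "finite I" using finUx by (simp add: I_def)
    have cardI: "card I \<le> 2 * m"
      using card_Un_le[of "Ux x" "Ux y"] cardUx[of x] cardUx[of y] unfolding I_def by linarith
    define a where "a U = phi U x" for U
    define b where "b U = phi U y" for U
    have Aa: "Np p I a = A x" unfolding A_def a_def
      by (rule Np_extend[OF p0 finI]) (auto simp: I_def Ux_def intro: phi_zero)
    have Bb: "Np p I b = A y" unfolding A_def b_def
      by (rule Np_extend[OF p0 finI]) (auto simp: I_def Ux_def intro: phi_zero)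
    define D where "D U = a U / A x - b U / A y" for U
    have xiI: "\<xi> x z = Np p I (\<lambda>U. a U / A x * mu U z powr (1/p))"
              "\<xi> y z = Np p I (\<lambda>U. b U / A y * mu U z powr (1/p))" for z
      unfolding \<xi>_def a_def b_def
      by (rule Np_extend[OF p0 finI, symmetric]; auto simp: I_def Ux_def intro: phi_zero)+
    have pt: "\<bar>\<xi> x z - \<xi> y z\<bar> powr p \<le> (\<Sum>U\<in>I. \<bar>D U\<bar> powr p * mu U z)" for z
    proof -
      have "\<bar>\<xi> x z - \<xi> y z\<bar> \<le> Np p I (\<lambda>U. a U / A x * mu U z powr (1/p) - b U / A y * mu U z powr (1/p))"
        unfolding xiI by (rule Np_rev[OF p1 finI])
      also have "(\<lambda>U. a U / A x * mu U z powr (1/p) - b U / A y * mu U z powr (1/p))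
                 = (\<lambda>U. D U * mu U z powr (1/p))"
        by (rule ext) (simp add: D_def algebra_simps)
      finally have "\<bar>\<xi> x z - \<xi> y z\<bar> powr p \<le> Np p I (\<lambda>U. D U * mu U z powr (1/p)) powr p"
        using p0 by (intro powr_mono2) auto
      thus ?thesis using Np_pow_mu[OF p0, of I D z] by simp
    qed
    define W where "W = S x \<union> S y"
    have finW: "finite W" using finS by (simp add: W_def)
    have zW: "\<And>z. z \<notin> W \<Longrightarrow> \<bar>\<xi> x z - \<xi> y z\<bar> powr p = 0"
      using xi_zero by (simp add: W_def)
    have "(\<Sum>z\<in>W. \<bar>\<xi> x z - \<xi> y z\<bar> powr p) \<le> (\<Sum>z\<in>W. \<Sum>U\<in>I. \<bar>D U\<bar> powr p * mu U z)"
      by (intro sum_mono pt)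
    also have "\<dots> = (\<Sum>U\<in>I. \<bar>D U\<bar> powr p * (\<Sum>z\<in>W. mu U z))"
      by (subst sum.swap) (simp add: sum_distrib_left)
    also have "\<dots> = (\<Sum>U\<in>I. \<bar>D U\<bar> powr p)"
    proof (intro sum.cong refl)
      fix U assume U: "U \<in> I"
      have "(\<Sum>z\<in>W. mu U z) = 1"
        using U finW finU by (intro mu_sum) (auto simp: W_def S_def Ux_def I_def)
      thus "\<bar>D U\<bar> powr p * (\<Sum>z\<in>W. mu U z) = \<bar>D U\<bar> powr p" by simp
    qed
    also have "\<dots> = Np p I D powr p" using p0 by (simp add: Np_pow)
    finally have le1: "(\<Sum>z\<in>W. \<bar>\<xi> x z - \<xi> y z\<bar> powr p) \<le> Np p I D powr p" .
    have "lp_norm p (\<lambda>z. \<xi> x z - \<xi> y z) = (\<Sum>z\<in>W. \<bar>\<xi> x z - \<xi> y z\<bar> powr p) powr (1/p)"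
      unfolding lp_norm_def using infsum_fin_support[OF finW zW] by simp
    also have "\<dots> \<le> (Np p I D powr p) powr (1/p)"
      using le1 p0 by (intro powr_mono2) (auto intro: sum_nonneg)
    also have "\<dots> = Np p I D" using p0 by (simp add: powr_powr Np_nonneg)
    also have "\<dots> \<le> 2 * Np p I (\<lambda>U. a U - b U) / A x"
      unfolding D_def using Np_normalize[OF p1 finI, of a b] Aa Bb A0 by simp
    also have "2 * Np p I (\<lambda>U. a U - b U) / A x \<le> 2 * (real (card I) powr (1/p) * dist x y) / A x"
    proof -
      have "Np p I (\<lambda>U. a U - b U) \<le> real (card I) powr (1/p) * dist x y"
        using p0 phi_lip by (intro Np_bound) (auto simp: a_def b_def)
      thus ?thesis using A0[of x] by (intro divide_right_mono mult_left_mono) auto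
    qed
    also have "\<dots> \<le> 2 * ((2 * real m ^ 2) powr (1/p) * dist x y) / A x"
    proof -
      have "real (card I) \<le> 2 * real m ^ 2"
      proof -
        have "real (card I) \<le> 2 * real m" using cardI by linarith
        also have "\<dots> \<le> 2 * real m ^ 2" using m1 by (simp add: power2_eq_square)
        finally show ?thesis .
      qed
      hence "real (card I) powr (1/p) \<le> (2 * real m ^ 2) powr (1/p)" using p0 by (intro powr_mono2) auto
      thus ?thesis using A0[of x] by (intro divide_right_mono mult_left_mono mult_right_mono) auto
    qed
    also have "2 * ((2 * real m ^ 2) powr (1/p) * dist x y) / A x \<le> 2 * ((2 * real m ^ 2) powr (1/p) * dist x y) / L"
      using L0 LA[of x] by (intro divide_left_mono) auto
    finally show ?thesis by (simp add: field_simps)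
  qed
  show ?thesis
    using part1 part2 part3 unfolding m_def L_def by blast
qed

end
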